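(* If $(A,W)$ is a Pratt comonoid such that $W$ is closed under complementation in $A$, then $W$ is closed under forming arbitrary unions, and also under forming arbitrary intersections.
   Context: A Pratt comonoid is a pair $(A,W)$ where $A$ is a set and $W$ is a set of subsets of $A$ such that (i) $\emptyset\in W$ and $A\in W$; (ii) whenever $C\subseteq A\times A$ is such that for every $a\in A$ both the $a$-th row $\{b\mid (a,b)\in C\}$ and the $a$-th column $\{b\mid (b,a)\in C\}$ belong to $W$ (a crossword over $W$), the diagonal $\{b\mid (b,b)\in C\}$ also belongs to $W$. *)

theory Defs
  imports Main
begin

definition crossword :: "'a set \<Rightarrow> 'a set set \<Rightarrow> ('a \<times> 'a) set \<Rightarrow> bool" where
  "crossword A W C \<longleftrightarrow> C \<subseteq> A \<times> A \<and>
     (\<forall>a\<in>A. {b. (a, b) \<in> C} \<in> W \<and> {b. (b, a) \<in> C} \<in> W)"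

definition pratt_comonoid :: "'a set \<Rightarrow> 'a set set \<Rightarrow> bool" where
  "pratt_comonoid A W \<longleftrightarrow> W \<subseteq> Pow A \<and> {} \<in> W \<and> A \<in> W \<and>
     (\<forall>C. crossword A W C \<longrightarrow> {b. (b, b) \<in> C} \<in> W)"

end

theory Submission
  imports Defs
begin

lemma pc_pow: "pratt_comonoid A W \<Longrightarrow> X \<in> W \<Longrightarrow> X \<subseteq> A"
  unfolding pratt_comonoid_def by blast

lemma pc_inter2:
  assumes pc: "pratt_comonoid A W" and P: "P \<in> W" and Q: "Q \<in> W"
  shows "P \<inter> Q \<in> W"
proof -
  have PA: "P \<subseteq> A" and QA: "Q \<subseteq> A" using pc P Q pc_pow by auto
  have e: "{} \<in> W" using pc unfolding pratt_comonoid_def by blast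
  have "crossword A W (P \<times> Q)"
    unfolding crossword_def
  proof (intro conjI ballI)
    show "P \<times> Q \<subseteq> A \<times> A" using PA QA by auto
  next
    fix a assume "a \<in> A"
    have "{b. (a, b) \<in> P \<times> Q} = (if a \<in> P then Q else {})" by auto
    then show "{b. (a, b) \<in> P \<times> Q} \<in> W" using Q e by simp
    have "{b. (b, a) \<in> P \<times> Q} = (if a \<in> Q then P else {})" by auto
    then show "{b. (b, a) \<in> P \<times> Q} \<in> W" using P e by simp
  qed
  then have "{b. (b, b) \<in> P \<times> Q} \<in> W" using pc unfolding pratt_comonoid_def by blast
  moreover have "{b. (b, b) \<in> P \<times> Q} = P \<inter> Q" by auto
  ultimately show ?thesis by simp
qed

lemma pc_disj:
  assumes pc: "pratt_comonoid A W" and G: "G \<subseteq> W"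
    and d: "\<And>X Y. X \<in> G \<Longrightarrow> Y \<in> G \<Longrightarrow> X \<noteq> Y \<Longrightarrow> X \<inter> Y = {}"
  shows "\<Union>G \<in> W"
proof -
  define C where "C = {(a,b). \<exists>X\<in>G. a \<in> X \<and> b \<in> X}"
  have e: "{} \<in> W" using pc unfolding pratt_comonoid_def by blast
  have row: "{b. (a, b) \<in> C} \<in> W" for a
  proof (cases "\<exists>X\<in>G. a \<in> X")
    case True
    then obtain X where X: "X \<in> G" "a \<in> X" by blast
    have "{b. (a, b) \<in> C} = X" unfolding C_def using X d by blast
    then show ?thesis using X G by auto
  next
    case False
    then have "{b. (a, b) \<in> C} = {}" unfolding C_def by blast
    then show ?thesis using e by simp
  qed
  have col: "{b. (b, a) \<in> C} = {b. (a, b) \<in> C}" for a unfolding C_def by blast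
  have CA: "C \<subseteq> A \<times> A" unfolding C_def using G pc_pow[OF pc] by blast
  have "crossword A W C" unfolding crossword_def
    using CA row col by simp
  then have "{b. (b, b) \<in> C} \<in> W" using pc unfolding pratt_comonoid_def by blast
  moreover have "{b. (b, b) \<in> C} = \<Union>G" unfolding C_def by blast
  ultimately show ?thesis by simp
qed

lemma pc_union:
  assumes pc: "pratt_comonoid A W" and cm: "\<forall>X\<in>W. A - X \<in> W" and F: "F \<subseteq> W"
  shows "\<Union>F \<in> W"
proof -
  have diff: "P - Q \<in> W" if "P \<in> W" "Q \<in> W" for P Q
  proof -
    have "P - Q = P \<inter> (A - Q)" using pc_pow[OF pc that(1)] by blast
    then show ?thesis using pc_inter2[OF pc that(1)] cm that(2) by simp
  qed
  obtain r where r: "well_order_on F r" using well_order_on by blast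
  define s where "s = r - Id"
  have wfs: "wf s" using r unfolding s_def well_order_on_def by blast
  have trs: "trans s" using r unfolding s_def order_on_defs
    by (simp add: trans_diff_Id)
  have sF: "s \<subseteq> F \<times> F" using r unfolding s_def order_on_defs by blast
  have tot: "\<And>X Y. X \<in> F \<Longrightarrow> Y \<in> F \<Longrightarrow> X \<noteq> Y \<Longrightarrow> (X,Y) \<in> s \<or> (Y,X) \<in> s"
    using r unfolding s_def order_on_defs total_on_def by blast
  define S where "S X = \<Union>{Y. (Y,X) \<in> s}" for X
  define D where "D X = X - S X" for X
  have dec: "\<Union>H = \<Union>(D ` H)" if Hs: "H \<subseteq> F" and Hd: "\<And>Y Z. Y \<in> H \<Longrightarrow> (Z,Y) \<in> s \<Longrightarrow> Z \<in> H" for H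
  proof
    show "\<Union>(D ` H) \<subseteq> \<Union>H" unfolding D_def by blast
    show "\<Union>H \<subseteq> \<Union>(D ` H)"
    proof
      fix a assume "a \<in> \<Union>H"
      then obtain Y where Y: "Y \<in> {Y \<in> H. a \<in> Y}" by blast
      obtain Z where Z: "Z \<in> {Y \<in> H. a \<in> Y}" and mn: "\<And>y. (y, Z) \<in> s \<Longrightarrow> y \<notin> {Y \<in> H. a \<in> Y}"
        using wfE_min[OF wfs Y] by blast
      have "a \<notin> S Z" unfolding S_def using mn Z Hd by blast
      then show "a \<in> \<Union>(D ` H)" using Z unfolding D_def by blast
    qed
  qed
  have dsj: "D X \<inter> D Y = {}" if "X \<in> F" "Y \<in> F" "X \<noteq> Y" for X Y
    using tot[OF that] unfolding D_def S_def by blast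
  have dsj2: "\<And>P Q. P \<in> D ` H \<Longrightarrow> Q \<in> D ` H \<Longrightarrow> P \<noteq> Q \<Longrightarrow> P \<inter> Q = {}" if "H \<subseteq> F" for H
    using dsj that by blast
  have SW: "S X \<in> W" if "X \<in> F" for X
    using that
  proof (induction X rule: wf_induct_rule[OF wfs])
    case (1 X)
    let ?H = "{Y. (Y,X) \<in> s}"
    have H1: "?H \<subseteq> F" using sF by blast
    have H2: "\<And>Y Z. Y \<in> ?H \<Longrightarrow> (Z,Y) \<in> s \<Longrightarrow> Z \<in> ?H" using trs by (meson mem_Collect_eq transD)
    have "D ` ?H \<subseteq> W"
    proof
      fix P assume "P \<in> D ` ?H"
      then obtain Y where Y: "(Y,X) \<in> s" "P = D Y" by blast
      have "Y \<in> F" using Y sF by blast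
      then have "S Y \<in> W" using 1 Y by blast
      then show "P \<in> W" using Y diff F \<open>Y \<in> F\<close> unfolding D_def by blast
    qed
    then have "\<Union>(D ` ?H) \<in> W" using pc_disj[OF pc _ dsj2[OF H1]] by blast
    then show ?case using dec[OF H1 H2] unfolding S_def by simp
  qed
  have "D ` F \<subseteq> W" using SW diff F unfolding D_def by blast
  then have "\<Union>(D ` F) \<in> W" using pc_disj[OF pc _ dsj2[of F]] by blast
  moreover have "\<Union>F = \<Union>(D ` F)" using dec[of F] sF by blast
  ultimately show ?thesis by simp
qed

theorem corollary4p3:
  fixes A :: "'a set" and W :: "'a set set"
  assumes "pratt_comonoid A W"
    and "\<forall>X\<in>W. A - X \<in> W"
  shows "(\<forall>F. F \<subseteq> W \<longrightarrow> \<Union>F \<in> W) \<and> (\<forall>F. F \<subseteq> W \<longrightarrow> A \<inter> \<Inter>F \<in> W)"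
proof (intro conjI allI impI)
  fix F assume "F \<subseteq> W"
  then show "\<Union>F \<in> W" using pc_union assms by blast
next
  fix F assume F: "F \<subseteq> W"
  let ?G = "(\<lambda>X. A - X) ` F"
  have "?G \<subseteq> W" using F assms(2) by blast
  then have "\<Union>?G \<in> W" using pc_union assms by blast
  then have "A - \<Union>?G \<in> W" using assms(2) by blast
  moreover have "A - \<Union>?G = A \<inter> \<Inter>F" by blast
  ultimately show "A \<inter> \<Inter>F \<in> W" by simp
qed

end
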